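(* The tensor $\mu^{(1)}:=\alpha_p\big\langle\{G(\nabla\chi^{(2)}+I\otimes\chi^{(1)})\overline{\phi^0}\}-\{G\chi^{(2)}\otimes\overline{\nabla\phi^0}\}\big\rangle$ vanishes: $\mu^{(1)}=0$. Also $\langle\rho\chi^{(1)}\overline{\phi^0}\rangle=0$ and $\langle\rho\chi^{(2)}\overline{\phi^0}\rangle=0$.
   Context: Let $d\ge1$; $G,\rho:\mathbb{R}^d\to\mathbb{R}$ smooth, $\mathbb{Z}^d$-periodic, bounded below by a positive constant. $W_I=[-1/2,1/2]^d$. Bloch eigenproblem: for each $k\in\mathbb{R}^d$, $-(\nabla+ik)\cdot[G(\nabla+ik)\phi]=\omega^2\rho\phi$ on $\mathbb{Z}^d$-periodic $\phi$ has eigenvalues $0\le\omega_0^2(k)\le\omega_1^2(k)\le\cdots$ with $\mathbb{Z}^d$-periodic eigenfunctions $\phi_m(k;\cdot)$, orthonormal w.r.t. $\int_{W_I}\rho\phi_m\overline{\phi_n}=\delta_{mn}$. A fixed index $p\ge0$ is such that $\omega_p^2(0)$ is simple; write $\phi^0=\phi_p(0;\cdot)$, $\hat\omega_0^2=\omega_p^2(0)$, $\langle g\rangle=\int_{W_I}g$. Tensor conventions: $\otimes$ concatenates indices; $I$ is the Kronecker delta; $(\nabla T)_{a i_1\dots i_n}=\partial_aT_{i_1\dots i_n}$; for an order-$(n+1)$ tensor $A$, $A:\overline{\nabla\phi}=\sum_aA_{a i_1\dots i_n}\overline{\partial_a\phi}$; $\{\tau\}$ is the average over all permutations of the indices; $\{\tau\}'_{j_1\dots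 j_n}=\frac{1}{(n-1)!}\sum\tau_{j_1l_2\dots l_n}$ over permutations $(l_2,\dots,l_n)$ of $(j_2,\dots,j_n)$. Cell functions: $\alpha_p=\langle\phi^0\overline{\phi^0}\rangle^{-1}$, $\rho^{(0)}=\alpha_p\langle\rho\phi^0\overline{\phi^0}\rangle$. $\chi^{(1)}\in(H^1_{\rm per}(W_I))^d$ is the unique solution with $\int\rho\chi^{(1)}\overline{\phi^0}=0$ of: for all periodic $\phi\in H^1_{\rm per}$, $\int G(\nabla\chi^{(1)}+I\phi^0):\overline{\nabla\phi}-\int G\nabla\phi^0\overline\phi=\hat\omega_0^2\int\rho\chi^{(1)}\overline\phi$. $\mu^{(0)}=\alpha_p\langle\{G(\nabla\chi^{(1)}+I\phi^0)\overline{\phi^0}\}-\{G\chi^{(1)}\otimes\overline{\nabla\phi^0}\}\rangle$. $\chi^{(2)}\in(H^1_{\rm per}(W_I))^{d\times d}$ is the unique solution with $\int\rho\chi^{(2)}\overline{\phi^0}=0$ of: for all $\phi\in H^1_{\rm per}$, $\int G(\nabla\chi^{(2)}+\{I\otimes\chi^{(1)}\}'):\overline{\nabla\phi}-\int G(\{\nabla\chi^{(1)}\}+I\phi^0)\overline\phi+\int\frac{\rho}{\rho^{(0)}}\mu^{(0)}\phi^0\overline\phi=\hat\omega_0^2\int\rho\chi^{(2)}\overline\phi$. *)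

theory Defs
  imports "HOL-Analysis.Analysis"
begin

text \<open>Points of R^d are vectors of type real^'d, with 'd a finite index type (d = CARD('d) >= 1).\<close>

definition pd :: "'d::finite \<Rightarrow> (real^'d \<Rightarrow> 'b::real_normed_vector) \<Rightarrow> real^'d \<Rightarrow> 'b" where
  "pd a f x = vector_derivative (\<lambda>t. f (x + t *\<^sub>R axis a 1)) (at 0)"

primrec iter_pd :: "'d::finite list \<Rightarrow> (real^'d \<Rightarrow> 'b::real_normed_vector) \<Rightarrow> real^'d \<Rightarrow> 'b" where
  "iter_pd [] f = f"
| "iter_pd (a # as) f = pd a (iter_pd as f)"

definition smooth_fun :: "(real^'d::finite \<Rightarrow> 'b::real_normed_vector) \<Rightarrow> bool" where
  "smooth_fun f \<longleftrightarrow>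
     (\<forall>as. continuous_on UNIV (iter_pd as f) \<and>
       (\<forall>a x. ((\<lambda>t. iter_pd as f (x + t *\<^sub>R axis a 1)) has_vector_derivative
                 iter_pd (a # as) f x) (at 0)))"

definition zd_periodic :: "(real^'d::finite \<Rightarrow> 'b) \<Rightarrow> bool" where
  "zd_periodic f \<longleftrightarrow> (\<forall>x v. (\<forall>i. v $ i \<in> \<int>) \<longrightarrow> f (x + v) = f x)"

definition WI :: "(real^'d::finite) set" where
  "WI = cbox (\<chi> i. - (1/2)) (\<chi> i. 1/2)"

definition cavg :: "(real^'d::finite \<Rightarrow> complex) \<Rightarrow> complex" where
  "cavg f = integral WI f"

definition kd :: "'d \<Rightarrow> 'd \<Rightarrow> complex" where
  "kd a b = (if a = b then 1 else 0)"

definition sym2 :: "('d \<Rightarrow> 'd \<Rightarrow> complex) \<Rightarrow> 'd \<Rightarrow> 'd \<Rightarrow> complex" where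
  "sym2 T i j = (T i j + T j i) / 2"

definition sym3 :: "('d \<Rightarrow> 'd \<Rightarrow> 'd \<Rightarrow> complex) \<Rightarrow> 'd \<Rightarrow> 'd \<Rightarrow> 'd \<Rightarrow> complex" where
  "sym3 T i j k = (T i j k + T i k j + T j i k + T j k i + T k i j + T k j i) / 6"

definition alpha_p :: "(real^'d::finite \<Rightarrow> complex) \<Rightarrow> complex" where
  "alpha_p \<phi>0 = inverse (cavg (\<lambda>x. \<phi>0 x * cnj (\<phi>0 x)))"

definition rho0 :: "(real^'d::finite \<Rightarrow> real) \<Rightarrow> (real^'d \<Rightarrow> complex) \<Rightarrow> complex" where
  "rho0 \<rho> \<phi>0 = alpha_p \<phi>0 * cavg (\<lambda>x. complex_of_real (\<rho> x) * \<phi>0 x * cnj (\<phi>0 x))"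

definition mu0 :: "(real^'d::finite \<Rightarrow> real) \<Rightarrow> (real^'d \<Rightarrow> complex) \<Rightarrow> ('d \<Rightarrow> real^'d \<Rightarrow> complex)
                    \<Rightarrow> 'd \<Rightarrow> 'd \<Rightarrow> complex" where
  "mu0 G \<phi>0 \<chi>1 j k = alpha_p \<phi>0 * cavg (\<lambda>x.
      sym2 (\<lambda>a i. complex_of_real (G x) * (pd a (\<chi>1 i) x + kd a i * \<phi>0 x) * cnj (\<phi>0 x)) j k
    - sym2 (\<lambda>i a. complex_of_real (G x) * \<chi>1 i x * cnj (pd a \<phi>0 x)) j k)"

definition mu1 :: "(real^'d::finite \<Rightarrow> real) \<Rightarrow> (real^'d \<Rightarrow> complex) \<Rightarrow> ('d \<Rightarrow> real^'d \<Rightarrow> complex)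
                    \<Rightarrow> ('d \<Rightarrow> 'd \<Rightarrow> real^'d \<Rightarrow> complex) \<Rightarrow> 'd \<Rightarrow> 'd \<Rightarrow> 'd \<Rightarrow> complex" where
  "mu1 G \<phi>0 \<chi>1 \<chi>2 i j k = alpha_p \<phi>0 * cavg (\<lambda>x.
      sym3 (\<lambda>a b c. complex_of_real (G x) * (pd a (\<chi>2 b c) x + kd a b * \<chi>1 c x) * cnj (\<phi>0 x)) i j k
    - sym3 (\<lambda>b c a. complex_of_real (G x) * \<chi>2 b c x * cnj (pd a \<phi>0 x)) i j k)"

definition admissible_coeff :: "(real^'d::finite \<Rightarrow> real) \<Rightarrow> bool" where
  "admissible_coeff f \<longleftrightarrow> smooth_fun f \<and> zd_periodic f \<and> (\<exists>c>0. \<forall>x. c \<le> f x)"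

definition per_smooth :: "(real^'d::finite \<Rightarrow> complex) \<Rightarrow> bool" where
  "per_smooth f \<longleftrightarrow> smooth_fun f \<and> zd_periodic f"

definition bloch_eig0 :: "(real^'d::finite \<Rightarrow> real) \<Rightarrow> (real^'d \<Rightarrow> real) \<Rightarrow> real \<Rightarrow> (real^'d \<Rightarrow> complex) \<Rightarrow> bool" where
  "bloch_eig0 G \<rho> w2 \<psi> \<longleftrightarrow> per_smooth \<psi> \<and>
     (\<forall>x. - (\<Sum>a\<in>UNIV. pd a (\<lambda>y. complex_of_real (G y) * pd a \<psi> y) x)
          = complex_of_real (w2 * \<rho> x) * \<psi> x)"

definition cell_chi1 :: "(real^'d::finite \<Rightarrow> real) \<Rightarrow> (real^'d \<Rightarrow> real) \<Rightarrow> real \<Rightarrow> (real^'d \<Rightarrow> complex)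
                         \<Rightarrow> ('d \<Rightarrow> real^'d \<Rightarrow> complex) \<Rightarrow> bool" where
  "cell_chi1 G \<rho> w2 \<phi>0 \<chi>1 \<longleftrightarrow>
     (\<forall>j. per_smooth (\<chi>1 j)) \<and>
     (\<forall>j. cavg (\<lambda>x. complex_of_real (\<rho> x) * \<chi>1 j x * cnj (\<phi>0 x)) = 0) \<and>
     (\<forall>\<phi> j. per_smooth \<phi> \<longrightarrow>
        cavg (\<lambda>x. \<Sum>a\<in>UNIV. complex_of_real (G x) * (pd a (\<chi>1 j) x + kd a j * \<phi>0 x) * cnj (pd a \<phi> x))
      - cavg (\<lambda>x. complex_of_real (G x) * pd j \<phi>0 x * cnj (\<phi> x))
      = complex_of_real w2 * cavg (\<lambda>x. complex_of_real (\<rho> x) * \<chi>1 j x * cnj (\<phi> x)))"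

text \<open>Cell problem for chi^(2) (weak form). The term {I (x) chi1}' symmetrises the last two indices.\<close>
definition cell_chi2 :: "(real^'d::finite \<Rightarrow> real) \<Rightarrow> (real^'d \<Rightarrow> real) \<Rightarrow> real \<Rightarrow> (real^'d \<Rightarrow> complex)
                         \<Rightarrow> ('d \<Rightarrow> real^'d \<Rightarrow> complex) \<Rightarrow> ('d \<Rightarrow> 'd \<Rightarrow> real^'d \<Rightarrow> complex) \<Rightarrow> bool" where
  "cell_chi2 G \<rho> w2 \<phi>0 \<chi>1 \<chi>2 \<longleftrightarrow>
     (\<forall>j k. per_smooth (\<chi>2 j k)) \<and>
     (\<forall>j k. cavg (\<lambda>x. complex_of_real (\<rho> x) * \<chi>2 j k x * cnj (\<phi>0 x)) = 0) \<and>
     (\<forall>\<phi> j k. per_smooth \<phi> \<longrightarrow>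
        cavg (\<lambda>x. \<Sum>a\<in>UNIV. complex_of_real (G x)
              * (pd a (\<chi>2 j k) x + (kd a j * \<chi>1 k x + kd a k * \<chi>1 j x) / 2) * cnj (pd a \<phi> x))
      - cavg (\<lambda>x. complex_of_real (G x)
              * ((pd j (\<chi>1 k) x + pd k (\<chi>1 j) x) / 2 + kd j k * \<phi>0 x) * cnj (\<phi> x))
      + cavg (\<lambda>x. complex_of_real (\<rho> x) / rho0 \<rho> \<phi>0 * mu0 G \<phi>0 \<chi>1 j k * \<phi>0 x * cnj (\<phi> x))
      = complex_of_real w2 * cavg (\<lambda>x. complex_of_real (\<rho> x) * \<chi>2 j k x * cnj (\<phi> x)))"

end

theory Submission
  imports Defs
begin


lemma smooth_cont: "smooth_fun f \<Longrightarrow> continuous_on UNIV f"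
  unfolding smooth_fun_def by (metis iter_pd.simps(1))

lemma smooth_cont_pd: "smooth_fun f \<Longrightarrow> continuous_on UNIV (pd a f)"
  unfolding smooth_fun_def by (metis iter_pd.simps)

lemma smooth_deriv: "smooth_fun f \<Longrightarrow> ((\<lambda>t. f (x + t *\<^sub>R axis a 1)) has_vector_derivative pd a f x) (at 0)"
  unfolding smooth_fun_def by (metis iter_pd.simps)

lemma smooth_deriv_pd: "smooth_fun f \<Longrightarrow> ((\<lambda>t. pd b f (x + t *\<^sub>R axis a 1)) has_vector_derivative pd a (pd b f) x) (at 0)"
  unfolding smooth_fun_def by (metis iter_pd.simps)

lemma pd_cnj_pt:
  assumes "((\<lambda>t. f (x + t *\<^sub>R axis a 1)) has_vector_derivative D) (at 0)"
  shows "pd a (\<lambda>y. cnj (f y)) x = cnj D"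
  unfolding pd_def using has_vector_derivative_cnj[OF assms] by (simp add: vector_derivative_at)

lemma iter_pd_cnj:
  assumes "smooth_fun f"
  shows "iter_pd as (\<lambda>y. cnj (f y)) = (\<lambda>y. cnj (iter_pd as f y))"
proof (induction as)
  case Nil then show ?case by simp
next
  case (Cons a as)
  show ?case
  proof
    fix x
    have d: "((\<lambda>t. iter_pd as f (x + t *\<^sub>R axis a 1)) has_vector_derivative iter_pd (a # as) f x) (at 0)"
      using assms unfolding smooth_fun_def by blast
    show "iter_pd (a # as) (\<lambda>y. cnj (f y)) x = cnj (iter_pd (a # as) f x)"
      using pd_cnj_pt[OF d] Cons by simp
  qed
qed

lemma smooth_cnj:
  assumes "smooth_fun f"
  shows "smooth_fun (\<lambda>y. cnj (f y))"
  unfolding smooth_fun_def iter_pd_cnj[OF assms]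
proof (intro allI conjI)
  fix as
  show "continuous_on UNIV (\<lambda>y. cnj (iter_pd as f y))"
    using assms unfolding smooth_fun_def by (intro continuous_intros) blast
  fix a x
  show "((\<lambda>t. cnj (iter_pd as f (x + t *\<^sub>R axis a 1))) has_vector_derivative cnj (iter_pd (a # as) f x)) (at 0)"
    using assms unfolding smooth_fun_def by (intro has_vector_derivative_cnj) blast
qed

lemma pd_cnj: "smooth_fun f \<Longrightarrow> pd a (\<lambda>y. cnj (f y)) = (\<lambda>y. cnj (pd a f y))"
  using iter_pd_cnj[of f "[a]"] by simp

lemma per_smooth_cnj: "per_smooth f \<Longrightarrow> per_smooth (\<lambda>y. cnj (f y))"
  unfolding per_smooth_def zd_periodic_def using smooth_cnj by auto

lemma pd_cmult:
  fixes f :: "real^'d::finite \<Rightarrow> complex"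
  assumes "smooth_fun f"
  shows "pd a (\<lambda>y. c * f y) x = c * pd a f x"
  using vector_derivative_at[OF has_vector_derivative_mult_right[OF smooth_deriv[OF assms, of x a], of c]]
  by (simp add: pd_def[of a "\<lambda>y. c * f y"])

lemma prod_deriv:
  fixes G :: "real^'d::finite \<Rightarrow> real" and f :: "real^'d \<Rightarrow> complex"
  assumes "smooth_fun G" "smooth_fun f"
  shows "\<exists>D. ((\<lambda>t. complex_of_real (G (x + t *\<^sub>R axis a 1)) * pd b f (x + t *\<^sub>R axis a 1)) has_vector_derivative D) (at 0)"
proof -
  have g: "((\<lambda>t. G (x + t *\<^sub>R axis a 1)) has_field_derivative pd a G x) (at 0)"
    using smooth_deriv[OF assms(1)] by (simp add: has_real_derivative_iff_has_vector_derivative)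
  show ?thesis
    using has_vector_derivative_mult[OF has_vector_derivative_of_real[OF g] smooth_deriv_pd[OF assms(2), of b x a]]
    by blast
qed

lemma pd_cnj_prod:
  fixes G :: "real^'d::finite \<Rightarrow> real" and f :: "real^'d \<Rightarrow> complex"
  assumes "smooth_fun G" "smooth_fun f"
  shows "pd a (\<lambda>y. complex_of_real (G y) * cnj (pd b f y)) x = cnj (pd a (\<lambda>y. complex_of_real (G y) * pd b f y) x)"
proof -
  obtain D where D: "((\<lambda>t. complex_of_real (G (x + t *\<^sub>R axis a 1)) * pd b f (x + t *\<^sub>R axis a 1)) has_vector_derivative D) (at 0)"
    using prod_deriv[OF assms] by blast
  have "pd a (\<lambda>y. complex_of_real (G y) * pd b f y) x = D"
    using D by (simp add: pd_def vector_derivative_at)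
  moreover have "(\<lambda>y. complex_of_real (G y) * cnj (pd b f y)) = (\<lambda>y. cnj (complex_of_real (G y) * pd b f y))"
    by simp
  ultimately show ?thesis using pd_cnj_pt[OF D] by metis
qed

lemma eig_cnj:
  assumes G: "admissible_coeff G" and eig: "bloch_eig0 G \<rho> w2 \<phi>"
  shows "bloch_eig0 G \<rho> w2 (\<lambda>x. cnj (\<phi> x))"
proof -
  have sG: "smooth_fun G" using G by (simp add: admissible_coeff_def)
  have sp: "smooth_fun \<phi>" using eig by (simp add: bloch_eig0_def per_smooth_def)
  have e: "\<And>x. - (\<Sum>a\<in>UNIV. pd a (\<lambda>y. complex_of_real (G y) * pd a \<phi> y) x) = complex_of_real (w2 * \<rho> x) * \<phi> x"
    using eig by (simp add: bloch_eig0_def)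
  have "\<And>a. (\<lambda>y. complex_of_real (G y) * pd a (\<lambda>y. cnj (\<phi> y)) y) = (\<lambda>y. cnj (complex_of_real (G y) * pd a \<phi> y))"
    by (simp add: pd_cnj[OF sp])
  then have "\<And>x. - (\<Sum>a\<in>UNIV. pd a (\<lambda>y. complex_of_real (G y) * pd a (\<lambda>y. cnj (\<phi> y)) y) x)
     = cnj (- (\<Sum>a\<in>UNIV. pd a (\<lambda>y. complex_of_real (G y) * pd a \<phi> y) x))"
    by (simp add: pd_cnj_prod[OF sG sp])
  moreover have "per_smooth (\<lambda>x. cnj (\<phi> x))" using eig per_smooth_cnj unfolding bloch_eig0_def by blast
  ultimately show ?thesis using e unfolding bloch_eig0_def by simp
qed



lemma kd_sym: "kd a b = kd b a" by (simp add: kd_def)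

lemma sum_kd: "(\<Sum>a\<in>UNIV. kd a i * X a) = X (i::'d::finite)"
proof -
  have "(\<Sum>a\<in>UNIV. kd a i * X a) = (\<Sum>a\<in>UNIV. if a = i then X a else 0)"
    by (rule sum.cong) (auto simp: kd_def)
  then show ?thesis by simp
qed

lemma alg:
  fixes g p c w r :: complex and dp u :: "'d::finite \<Rightarrow> complex"
    and du v :: "'d \<Rightarrow> 'd \<Rightarrow> complex" and dv :: "'d \<Rightarrow> 'd \<Rightarrow> 'd \<Rightarrow> complex"
  assumes D: "\<And>i j k. D i j k = ((\<Sum>a\<in>UNIV. g * (du a i + kd a i * p) * dv a j k) - g * dp i * v j k - w * (r * u i * v j k))
     - ((\<Sum>a\<in>UNIV. g * (dv a j k + (kd a j * u k + kd a k * u j)/2) * du a i) - g * ((du j k + du k j)/2 + kd j k * p) * u i - w * (r * v j k * u i))"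
  shows "6 * (sym3 (\<lambda>a b c'. g * (dv a b c' + kd a b * u c') * (c * p)) i j k - sym3 (\<lambda>b c' a. g * v b c' * (c * dp a)) i j k)
     = c * (D i j k + D i k j + D j i k + D j k i + D k i j + D k j i)"
proof -
  have S1: "\<And>i j k. (\<Sum>a\<in>UNIV. g * (du a i + kd a i * p) * dv a j k) = (\<Sum>a\<in>UNIV. g * du a i * dv a j k) + g * p * dv i j k"
  proof -
    fix i j k
    have "(\<Sum>a\<in>UNIV. g * (du a i + kd a i * p) * dv a j k) = (\<Sum>a\<in>UNIV. g * du a i * dv a j k + kd a i * (g * p * dv a j k))"
      by (rule sum.cong) (auto simp: algebra_simps)
    then show "?thesis i j k" by (simp add: sum.distrib sum_kd)
  qed
  have S2: "\<And>i j k. (\<Sum>a\<in>UNIV. g * (dv a j k + (kd a j * u k + kd a k * u j)/2) * du a i)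
      = (\<Sum>a\<in>UNIV. g * du a i * dv a j k) + g * u k * du j i / 2 + g * u j * du k i / 2"
  proof -
    fix i j k
    have "(\<Sum>a\<in>UNIV. g * (dv a j k + (kd a j * u k + kd a k * u j)/2) * du a i)
       = (\<Sum>a\<in>UNIV. g * du a i * dv a j k + kd a j * (g * u k * du a i * (1/2)) + kd a k * (g * u j * du a i * (1/2)))"
      by (rule sum.cong) (auto simp: algebra_simps add_divide_distrib)
    then show "?thesis i j k" by (simp only: sum.distrib sum_kd) simp
  qed
  have DD: "\<And>i j k. D i j k = g * p * dv i j k - g * dp i * v j k + g * kd j k * p * u i
      - g * (u k * du j i + u j * du k i) / 2 + g * (du j k + du k j) / 2 * u i"
    unfolding D S1 S2 by (simp add: algebra_simps add_divide_distrib diff_divide_distrib)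
  show ?thesis unfolding DD sym3_def
    by (simp add: algebra_simps add_divide_distrib diff_divide_distrib kd_sym)
qed

lemma integ: "continuous_on UNIV f \<Longrightarrow> (f::real^'d::finite \<Rightarrow> complex) integrable_on WI"
  unfolding WI_def by (rule integrable_continuous) (rule continuous_on_subset, auto)

lemma hasint0: "(f::real^'d::finite \<Rightarrow> complex) integrable_on WI \<Longrightarrow> cavg f = 0 \<Longrightarrow> (f has_integral 0) WI"
  unfolding cavg_def using integrable_integral by fastforce

theorem mainTheorem9:
  fixes G \<rho> :: "real^'d::finite \<Rightarrow> real"
    and \<phi>0 :: "real^'d \<Rightarrow> complex"
    and w2 :: real
    and \<chi>1 :: "'d \<Rightarrow> real^'d \<Rightarrow> complex"
    and \<chi>2 :: "'d \<Rightarrow> 'd \<Rightarrow> real^'d \<Rightarrow> complex"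
  assumes G: "admissible_coeff G"
    and rho: "admissible_coeff \<rho>"
    and eig: "bloch_eig0 G \<rho> w2 \<phi>0"
    and norm: "cavg (\<lambda>x. complex_of_real (\<rho> x) * \<phi>0 x * cnj (\<phi>0 x)) = 1"
    and simple: "\<And>\<psi>. bloch_eig0 G \<rho> w2 \<psi> \<Longrightarrow> \<exists>c::complex. \<forall>x. \<psi> x = c * \<phi>0 x"
    and chi1: "cell_chi1 G \<rho> w2 \<phi>0 \<chi>1"
    and chi2: "cell_chi2 G \<rho> w2 \<phi>0 \<chi>1 \<chi>2"
  shows "(\<forall>i j k. mu1 G \<phi>0 \<chi>1 \<chi>2 i j k = 0)
       \<and> (\<forall>j. cavg (\<lambda>x. complex_of_real (\<rho> x) * \<chi>1 j x * cnj (\<phi>0 x)) = 0)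
       \<and> (\<forall>j k. cavg (\<lambda>x. complex_of_real (\<rho> x) * \<chi>2 j k x * cnj (\<phi>0 x)) = 0)"
proof -
  have sG: "smooth_fun G" and sR: "smooth_fun \<rho>" using G rho by (auto simp: admissible_coeff_def)
  have sp: "smooth_fun \<phi>0" and pp: "per_smooth \<phi>0" using eig by (auto simp: bloch_eig0_def per_smooth_def)
  have p1: "\<And>i. per_smooth (\<chi>1 i)" and o1: "\<And>i. cavg (\<lambda>x. complex_of_real (\<rho> x) * \<chi>1 i x * cnj (\<phi>0 x)) = 0"
    and w1: "\<And>\<phi> j. per_smooth \<phi> \<Longrightarrow>
        cavg (\<lambda>x. \<Sum>a\<in>UNIV. complex_of_real (G x) * (pd a (\<chi>1 j) x + kd a j * \<phi>0 x) * cnj (pd a \<phi> x))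
      - cavg (\<lambda>x. complex_of_real (G x) * pd j \<phi>0 x * cnj (\<phi> x))
      = complex_of_real w2 * cavg (\<lambda>x. complex_of_real (\<rho> x) * \<chi>1 j x * cnj (\<phi> x))"
    using chi1 unfolding cell_chi1_def by blast+
  have p2: "\<And>j k. per_smooth (\<chi>2 j k)" and o2: "\<And>j k. cavg (\<lambda>x. complex_of_real (\<rho> x) * \<chi>2 j k x * cnj (\<phi>0 x)) = 0"
    and w2': "\<And>\<phi> j k. per_smooth \<phi> \<Longrightarrow>
        cavg (\<lambda>x. \<Sum>a\<in>UNIV. complex_of_real (G x)
              * (pd a (\<chi>2 j k) x + (kd a j * \<chi>1 k x + kd a k * \<chi>1 j x) / 2) * cnj (pd a \<phi> x))
      - cavg (\<lambda>x. complex_of_real (G x)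
              * ((pd j (\<chi>1 k) x + pd k (\<chi>1 j) x) / 2 + kd j k * \<phi>0 x) * cnj (\<phi> x))
      + cavg (\<lambda>x. complex_of_real (\<rho> x) / rho0 \<rho> \<phi>0 * mu0 G \<phi>0 \<chi>1 j k * \<phi>0 x * cnj (\<phi> x))
      = complex_of_real w2 * cavg (\<lambda>x. complex_of_real (\<rho> x) * \<chi>2 j k x * cnj (\<phi> x))"
    using chi2 unfolding cell_chi2_def by blast+
  have s1: "\<And>i. smooth_fun (\<chi>1 i)" and s2: "\<And>j k. smooth_fun (\<chi>2 j k)"
    using p1 p2 by (auto simp: per_smooth_def)
  have cG: "continuous_on UNIV (\<lambda>x. complex_of_real (G x))"
    using smooth_cont[OF sG] by (intro continuous_intros)
  have cR: "continuous_on UNIV (\<lambda>x. complex_of_real (\<rho> x))"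
    using smooth_cont[OF sR] by (intro continuous_intros)
  have two: "\<forall>x\<in>UNIV. (2::complex) \<noteq> 0" by simp
  note cc = two smooth_cont[OF sG] smooth_cont[OF sR] cG cR smooth_cont[OF sp] smooth_cont_pd[OF sp] smooth_cont[OF s1] smooth_cont_pd[OF s1]
     smooth_cont[OF s2] smooth_cont_pd[OF s2]
  obtain c where c: "\<And>x. cnj (\<phi>0 x) = c * \<phi>0 x"
    using simple[OF eig_cnj[OF G eig]] by blast
  have cfun: "(\<lambda>y. cnj (\<phi>0 y)) = (\<lambda>y. c * \<phi>0 y)" using c by auto
  have cd: "\<And>a x. cnj (pd a \<phi>0 x) = c * pd a \<phi>0 x"
  proof -
    fix a x
    have "cnj (pd a \<phi>0 x) = pd a (\<lambda>y. cnj (\<phi>0 y)) x" by (simp add: pd_cnj[OF sp])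
    also have "\<dots> = c * pd a \<phi>0 x" unfolding cfun by (rule pd_cmult[OF sp])
    finally show "cnj (pd a \<phi>0 x) = c * pd a \<phi>0 x" .
  qed
  have cinv: "\<And>x. \<phi>0 x = cnj c * cnj (\<phi>0 x)"
    by (metis c complex_cnj_cnj complex_cnj_mult)
  have Kz: "\<And>i j k. cavg (\<lambda>x. complex_of_real (\<rho> x) / rho0 \<rho> \<phi>0 * mu0 G \<phi>0 \<chi>1 j k * \<phi>0 x * \<chi>1 i x) = 0"
  proof -
    fix i j k
    have "(\<lambda>x. complex_of_real (\<rho> x) / rho0 \<rho> \<phi>0 * mu0 G \<phi>0 \<chi>1 j k * \<phi>0 x * \<chi>1 i x)
       = (\<lambda>x. (mu0 G \<phi>0 \<chi>1 j k / rho0 \<rho> \<phi>0 * cnj c) * (complex_of_real (\<rho> x) * \<chi>1 i x * cnj (\<phi>0 x)))"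
      by (rule ext, subst cinv) (simp add: algebra_simps)
    then show "?thesis i j k" using o1[of i] by (simp add: cavg_def)
  qed
  define E1 where "E1 i j k x = (\<Sum>a\<in>UNIV. complex_of_real (G x) * (pd a (\<chi>1 i) x + kd a i * \<phi>0 x) * pd a (\<chi>2 j k) x)
      - complex_of_real (G x) * pd i \<phi>0 x * \<chi>2 j k x - complex_of_real w2 * (complex_of_real (\<rho> x) * \<chi>1 i x * \<chi>2 j k x)"
    for i j k x
  define E2 where "E2 i j k x = (\<Sum>a\<in>UNIV. complex_of_real (G x) * (pd a (\<chi>2 j k) x + (kd a j * \<chi>1 k x + kd a k * \<chi>1 j x) / 2) * pd a (\<chi>1 i) x)
      - complex_of_real (G x) * ((pd j (\<chi>1 k) x + pd k (\<chi>1 j) x) / 2 + kd j k * \<phi>0 x) * \<chi>1 i x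
      - complex_of_real w2 * (complex_of_real (\<rho> x) * \<chi>2 j k x * \<chi>1 i x)"
    for i j k x
  have I1: "\<And>i j k. (E1 i j k has_integral 0) WI"
  proof -
    fix i j k
    have e: "cavg (\<lambda>x. \<Sum>a\<in>UNIV. complex_of_real (G x) * (pd a (\<chi>1 i) x + kd a i * \<phi>0 x) * pd a (\<chi>2 j k) x)
      - cavg (\<lambda>x. complex_of_real (G x) * pd i \<phi>0 x * \<chi>2 j k x)
      = complex_of_real w2 * cavg (\<lambda>x. complex_of_real (\<rho> x) * \<chi>1 i x * \<chi>2 j k x)"
      using w1[OF per_smooth_cnj[OF p2[of j k]], of i] by (simp add: pd_cnj[OF s2])
    have "E1 i j k integrable_on WI" unfolding E1_def[abs_def]
      by (rule integ) (intro continuous_intros cc)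
    moreover have "cavg (E1 i j k) = 0"
    proof -
      have "cavg (E1 i j k) = cavg (\<lambda>x. \<Sum>a\<in>UNIV. complex_of_real (G x) * (pd a (\<chi>1 i) x + kd a i * \<phi>0 x) * pd a (\<chi>2 j k) x)
      - cavg (\<lambda>x. complex_of_real (G x) * pd i \<phi>0 x * \<chi>2 j k x)
      - complex_of_real w2 * cavg (\<lambda>x. complex_of_real (\<rho> x) * \<chi>1 i x * \<chi>2 j k x)"
        unfolding cavg_def E1_def[abs_def]
        by (subst integral_diff integral_mult_right, (rule integ, intro continuous_intros cc)+)+ simp
      then show ?thesis using e by simp
    qed
    ultimately show "(E1 i j k has_integral 0) WI" by (rule hasint0)
  qed
  have I2: "\<And>i j k. (E2 i j k has_integral 0) WI"
  proof -
    fix i j k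
    have e: "cavg (\<lambda>x. \<Sum>a\<in>UNIV. complex_of_real (G x) * (pd a (\<chi>2 j k) x + (kd a j * \<chi>1 k x + kd a k * \<chi>1 j x) / 2) * pd a (\<chi>1 i) x)
      - cavg (\<lambda>x. complex_of_real (G x) * ((pd j (\<chi>1 k) x + pd k (\<chi>1 j) x) / 2 + kd j k * \<phi>0 x) * \<chi>1 i x)
      + cavg (\<lambda>x. complex_of_real (\<rho> x) / rho0 \<rho> \<phi>0 * mu0 G \<phi>0 \<chi>1 j k * \<phi>0 x * \<chi>1 i x)
      = complex_of_real w2 * cavg (\<lambda>x. complex_of_real (\<rho> x) * \<chi>2 j k x * \<chi>1 i x)"
      using w2'[OF per_smooth_cnj[OF p1[of i]], of j k] by (simp add: pd_cnj[OF s1])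
    have "E2 i j k integrable_on WI" unfolding E2_def[abs_def]
      by (rule integ) (intro continuous_intros cc)
    moreover have "cavg (E2 i j k) = 0"
    proof -
      have "cavg (E2 i j k) = cavg (\<lambda>x. \<Sum>a\<in>UNIV. complex_of_real (G x) * (pd a (\<chi>2 j k) x + (kd a j * \<chi>1 k x + kd a k * \<chi>1 j x) / 2) * pd a (\<chi>1 i) x)
      - cavg (\<lambda>x. complex_of_real (G x) * ((pd j (\<chi>1 k) x + pd k (\<chi>1 j) x) / 2 + kd j k * \<phi>0 x) * \<chi>1 i x)
      - complex_of_real w2 * cavg (\<lambda>x. complex_of_real (\<rho> x) * \<chi>2 j k x * \<chi>1 i x)"
        unfolding cavg_def E2_def[abs_def]
        by (subst integral_diff integral_mult_right, (rule integ, intro continuous_intros cc)+)+ simp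
      then show ?thesis using e Kz[of j k i] by simp
    qed
    ultimately show "(E2 i j k has_integral 0) WI" by (rule hasint0)
  qed
  define D where "D i j k x = E1 i j k x - E2 i j k x" for i j k x
  have ID: "\<And>i j k. (D i j k has_integral 0) WI"
    unfolding D_def[abs_def] using has_integral_diff[OF I1 I2] by simp
  have mu: "mu1 G \<phi>0 \<chi>1 \<chi>2 i j k = 0" for i j k
  proof -
    have pt: "(\<lambda>x. sym3 (\<lambda>a b c'. complex_of_real (G x) * (pd a (\<chi>2 b c') x + kd a b * \<chi>1 c' x) * cnj (\<phi>0 x)) i j k
    - sym3 (\<lambda>b c' a. complex_of_real (G x) * \<chi>2 b c' x * cnj (pd a \<phi>0 x)) i j k)
      = (\<lambda>x. c / 6 * (D i j k x + D i k j x + D j i k x + D j k i x + D k i j x + D k j i x))"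
    proof
      fix x
      have "6 * (sym3 (\<lambda>a b c'. complex_of_real (G x) * (pd a (\<chi>2 b c') x + kd a b * \<chi>1 c' x) * (c * \<phi>0 x)) i j k
          - sym3 (\<lambda>b c' a. complex_of_real (G x) * \<chi>2 b c' x * (c * pd a \<phi>0 x)) i j k)
        = c * (D i j k x + D i k j x + D j i k x + D j k i x + D k i j x + D k j i x)"
        by (rule alg[where D="\<lambda>i j k. D i j k x"]) (simp add: D_def E1_def E2_def)
      then show "sym3 (\<lambda>a b c'. complex_of_real (G x) * (pd a (\<chi>2 b c') x + kd a b * \<chi>1 c' x) * cnj (\<phi>0 x)) i j k
    - sym3 (\<lambda>b c' a. complex_of_real (G x) * \<chi>2 b c' x * cnj (pd a \<phi>0 x)) i j k
      = c / 6 * (D i j k x + D i k j x + D j i k x + D j k i x + D k i j x + D k j i x)"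
        unfolding c cd by (simp add: field_simps)
    qed
    have "((\<lambda>x. c / 6 * (D i j k x + D i k j x + D j i k x + D j k i x + D k i j x + D k j i x)) has_integral (c/6 * (0+0+0+0+0+0))) WI"
      by (intro has_integral_mult_right has_integral_add ID)
    then have "((\<lambda>x. c / 6 * (D i j k x + D i k j x + D j i k x + D j k i x + D k i j x + D k j i x)) has_integral 0) WI"
      by (simp only: add_0_left mult_zero_right)
    then have "integral WI (\<lambda>x. c / 6 * (D i j k x + D i k j x + D j i k x + D j k i x + D k i j x + D k j i x)) = 0"
      by (rule integral_unique)
    then show ?thesis unfolding mu1_def cavg_def pt by simp
  qed
  show ?thesis using mu o1 o2 by blast
qed

end
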